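(* Let $A$ be a semiprime associative algebra and $Q$ any subalgebra of $Q^l_{\max}(A)$ containing $A$. Then $A\subseteq Q$ is a dense extension.
   Context: Algebras over a commutative unital ring $\Phi$; $Q^l_{\max}(A)$ is the maximal left (Utumi) quotient algebra of $A$. For an algebra $Q$, $M(Q)$ is the subalgebra of $\mathrm{End}_\Phi(Q)$ generated by the identity and the left and right multiplication operators $\lambda_q(x)=qx$, $\rho_q(x)=xq$, $q\in Q$. An extension $A\subseteq Q$ is dense if the only $\mu\in M(Q)$ with $\mu(A)=0$ is $\mu=0$. *)

theory Defs
  imports Main
begin

text \<open>The ambient algebra
  (playing the role of Q^l_max(A)) is a type 'q of class ring (HOL's ring is
  associative, not necessarily unital), with a scalar multiplication s making it
  a \<Phi>-algebra.\<close>

definition phi_algebra :: "('k::comm_ring_1 \<Rightarrow> 'q::ring \<Rightarrow> 'q) \<Rightarrow> bool" where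
  "phi_algebra s \<longleftrightarrow>
     (\<forall>r x y. s r (x + y) = s r x + s r y) \<and> (\<forall>r t x. s (r + t) x = s r x + s t x) \<and>
     (\<forall>r t x. s r (s t x) = s (r * t) x) \<and> (\<forall>x. s 1 x = x) \<and>
     (\<forall>r x y. s r (x * y) = s r x * y \<and> s r (x * y) = x * s r y)"

definition subalgebra :: "('k::comm_ring_1 \<Rightarrow> 'q::ring \<Rightarrow> 'q) \<Rightarrow> 'q set \<Rightarrow> bool" where
  "subalgebra s B \<longleftrightarrow> 0 \<in> B \<and> (\<forall>x\<in>B. \<forall>y\<in>B. x + y \<in> B \<and> x * y \<in> B)
     \<and> (\<forall>r. \<forall>x\<in>B. s r x \<in> B)"

definition alg_ideal :: "('k::comm_ring_1 \<Rightarrow> 'q::ring \<Rightarrow> 'q) \<Rightarrow> 'q set \<Rightarrow> 'q set \<Rightarrow> bool" where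
  "alg_ideal s A I \<longleftrightarrow> I \<subseteq> A \<and> 0 \<in> I \<and> (\<forall>x\<in>I. \<forall>y\<in>I. x + y \<in> I)
     \<and> (\<forall>r. \<forall>x\<in>I. s r x \<in> I) \<and> (\<forall>a\<in>A. \<forall>x\<in>I. a * x \<in> I \<and> x * a \<in> I)"

text \<open>Semiprime: no nonzero ideal I with I^2 = 0 (I^2 is spanned by the products xy, x,y in I).\<close>
definition semiprime :: "('k::comm_ring_1 \<Rightarrow> 'q::ring \<Rightarrow> 'q) \<Rightarrow> 'q set \<Rightarrow> bool" where
  "semiprime s A \<longleftrightarrow> (\<forall>I. alg_ideal s A I \<and> (\<forall>x\<in>I. \<forall>y\<in>I. x * y = 0) \<longrightarrow> I \<subseteq> {0})"

definition left_ideal :: "('k::comm_ring_1 \<Rightarrow> 'q::ring \<Rightarrow> 'q) \<Rightarrow> 'q set \<Rightarrow> 'q set \<Rightarrow> bool" where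
  "left_ideal s A I \<longleftrightarrow> I \<subseteq> A \<and> 0 \<in> I \<and> (\<forall>x\<in>I. \<forall>y\<in>I. x + y \<in> I)
     \<and> (\<forall>r. \<forall>x\<in>I. s r x \<in> I) \<and> (\<forall>a\<in>A. \<forall>x\<in>I. a * x \<in> I)"

definition dense_left_ideal :: "('k::comm_ring_1 \<Rightarrow> 'q::ring \<Rightarrow> 'q) \<Rightarrow> 'q set \<Rightarrow> 'q set \<Rightarrow> bool" where
  "dense_left_ideal s A I \<longleftrightarrow> left_ideal s A I \<and>
     (\<forall>p\<in>A. \<forall>q\<in>A. p \<noteq> 0 \<longrightarrow> (\<exists>a\<in>A. a * p \<noteq> 0 \<and> a * q \<in> I))"

definition left_module_hom :: "('k::comm_ring_1 \<Rightarrow> 'q::ring \<Rightarrow> 'q) \<Rightarrow> 'q set \<Rightarrow> 'q set \<Rightarrow> ('q \<Rightarrow> 'q) \<Rightarrow> bool" where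
  "left_module_hom s A I f \<longleftrightarrow> (\<forall>x\<in>I. f x \<in> A) \<and> (\<forall>x\<in>I. \<forall>y\<in>I. f (x + y) = f x + f y)
     \<and> (\<forall>r. \<forall>x\<in>I. f (s r x) = s r (f x)) \<and> (\<forall>a\<in>A. \<forall>x\<in>I. f (a * x) = a * f x)"

text \<open>The whole ambient algebra (UNIV) is a maximal left (Utumi) quotient algebra of the
  subalgebra A, via the standard characterisation: (i) it is a left quotient algebra of A
  (for p, q with p \<noteq> 0 there is a in A with ap \<noteq> 0 and aq in A), and (ii) every left
  A-module homomorphism from a dense left ideal of A into A is right multiplication by
  some element.\<close>
definition is_max_left_quotient :: "('k::comm_ring_1 \<Rightarrow> 'q::ring \<Rightarrow> 'q) \<Rightarrow> 'q set \<Rightarrow> bool" where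
  "is_max_left_quotient s A \<longleftrightarrow> subalgebra s A \<and>
     (\<forall>p q. p \<noteq> 0 \<longrightarrow> (\<exists>a\<in>A. a * p \<noteq> 0 \<and> a * q \<in> A)) \<and>
     (\<forall>I f. dense_left_ideal s A I \<and> left_module_hom s A I f \<longrightarrow> (\<exists>q. \<forall>x\<in>I. f x = x * q))"

text \<open>M(Q): the subalgebra of End(Q) generated by the identity and the left and right
  multiplication operators by elements of Q (operators are compared on Q).\<close>
inductive_set mult_algebra :: "('k::comm_ring_1 \<Rightarrow> 'q::ring \<Rightarrow> 'q) \<Rightarrow> 'q set \<Rightarrow> ('q \<Rightarrow> 'q) set"
  for s :: "'k::comm_ring_1 \<Rightarrow> 'q::ring \<Rightarrow> 'q" and Q :: "'q set" where
  ma_id: "id \<in> mult_algebra s Q"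
| ma_left: "q \<in> Q \<Longrightarrow> (\<lambda>x. q * x) \<in> mult_algebra s Q"
| ma_right: "q \<in> Q \<Longrightarrow> (\<lambda>x. x * q) \<in> mult_algebra s Q"
| ma_zero: "(\<lambda>x. 0) \<in> mult_algebra s Q"
| ma_add: "f \<in> mult_algebra s Q \<Longrightarrow> g \<in> mult_algebra s Q \<Longrightarrow> (\<lambda>x. f x + g x) \<in> mult_algebra s Q"
| ma_scale: "f \<in> mult_algebra s Q \<Longrightarrow> (\<lambda>x. s r (f x)) \<in> mult_algebra s Q"
| ma_comp: "f \<in> mult_algebra s Q \<Longrightarrow> g \<in> mult_algebra s Q \<Longrightarrow> f \<circ> g \<in> mult_algebra s Q"

definition dense_extension :: "('k::comm_ring_1 \<Rightarrow> 'q::ring \<Rightarrow> 'q) \<Rightarrow> 'q set \<Rightarrow> 'q set \<Rightarrow> bool" where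
  "dense_extension s A Q \<longleftrightarrow> A \<subseteq> Q \<and>
     (\<forall>\<mu>\<in>mult_algebra s Q. (\<forall>a\<in>A. \<mu> a = 0) \<longrightarrow> (\<forall>x\<in>Q. \<mu> x = 0))"

end

theory Submission
  imports Defs
begin

locale mq =
  fixes s :: "'k::comm_ring_1 \<Rightarrow> 'q::ring \<Rightarrow> 'q" and A :: "'q set"
  assumes phi: "phi_algebra s" and mqa: "is_max_left_quotient s A" and sp: "semiprime s A"
begin

lemma phi_add: "s r (x + y) = s r x + s r y"
  using phi unfolding phi_algebra_def by blast
lemma phi_addk: "s (r + t) x = s r x + s t x"
  using phi unfolding phi_algebra_def by blast
lemma phi_one: "s 1 x = x"
  using phi unfolding phi_algebra_def by blast
lemma phi_mL: "s r (x * y) = s r x * y"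
  using phi unfolding phi_algebra_def by blast
lemma phi_mR: "s r (x * y) = x * s r y"
  using phi unfolding phi_algebra_def by blast
lemma phi_r0: "s r 0 = 0"
proof -
  have "s r (0 + 0) = s r 0 + s r 0" by (rule phi_add)
  thus ?thesis by simp
qed
lemma phi_0: "s 0 x = 0"
proof -
  have "s (0 + 0) x = s 0 x + s 0 x" by (rule phi_addk)
  thus ?thesis by simp
qed
lemma phi_neg: "s (-1) x = - x"
proof -
  have "s ((-1) + 1) x = s (-1) x + s 1 x" by (rule phi_addk)
  hence "0 = s (-1) x + x" using phi_0 phi_one by simp
  thus ?thesis by (simp add: eq_neg_iff_add_eq_0)
qed

lemma subA: "subalgebra s A" using mqa unfolding is_max_left_quotient_def by blast
lemma lq: "p \<noteq> 0 \<Longrightarrow> \<exists>a\<in>A. a * p \<noteq> 0 \<and> a * q \<in> A"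
  using mqa unfolding is_max_left_quotient_def by blast
lemma mx: "dense_left_ideal s A I \<Longrightarrow> left_module_hom s A I f \<Longrightarrow> \<exists>q. \<forall>x\<in>I. f x = x * q"
  using mqa unfolding is_max_left_quotient_def by blast

lemma A0: "0 \<in> A" using subA unfolding subalgebra_def by blast
lemma Aadd: "x \<in> A \<Longrightarrow> y \<in> A \<Longrightarrow> x + y \<in> A" using subA unfolding subalgebra_def by blast
lemma Amul: "x \<in> A \<Longrightarrow> y \<in> A \<Longrightarrow> x * y \<in> A" using subA unfolding subalgebra_def by blast
lemma Ascal: "x \<in> A \<Longrightarrow> s r x \<in> A" using subA unfolding subalgebra_def by blast
lemma Aneg: "x \<in> A \<Longrightarrow> - x \<in> A"
proof -
  assume "x \<in> A"
  hence "s (-1) x \<in> A" by (rule Ascal)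
  thus "- x \<in> A" by (simp only: phi_neg)
qed
lemma Adiff: "x \<in> A \<Longrightarrow> y \<in> A \<Longrightarrow> x - y \<in> A"
proof -
  assume "x \<in> A" "y \<in> A"
  hence "x + - y \<in> A" by (intro Aadd Aneg)
  thus "x - y \<in> A" by (simp only: diff_conv_add_uminus)
qed

lemma SP1:
  assumes "x \<in> A" "\<forall>k\<in>A. x * k = 0"
  shows "x = 0"
proof -
  let ?M = "{x\<in>A. \<forall>k\<in>A. x * k = 0}"
  have "alg_ideal s A ?M"
    unfolding alg_ideal_def
  proof (intro conjI ballI allI)
    fix r x assume "x \<in> ?M"
    moreover have "s r x * k = s r (x * k)" for k by (simp add: phi_mL)
    ultimately show "s r x \<in> ?M" by (auto simp: Ascal phi_r0)
  qed (auto simp: A0 Aadd Amul distrib_right mult.assoc)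
  moreover have "\<forall>x\<in>?M. \<forall>y\<in>?M. x * y = 0" by auto
  ultimately have "?M \<subseteq> {0}" using sp unfolding semiprime_def by blast
  thus ?thesis using assms by auto
qed

lemma SP2:
  assumes "y \<in> A" "\<forall>t\<in>A. y * t * y = 0" "r \<in> A" "u \<in> A"
  shows "r * y * u = 0"
proof -
  let ?K = "{x\<in>A. \<forall>r\<in>A. y * r * x = 0}"
  let ?M = "{x\<in>?K. \<forall>k\<in>?K. x * k = 0}"
  have Kl: "a * k \<in> ?K" if "a \<in> A" "k \<in> ?K" for a k
  proof -
    have "y * r * (a * k) = y * (r * a) * k" for r by (simp add: mult.assoc)
    thus ?thesis using that by (auto simp: Amul)
  qed
  have "alg_ideal s A ?M"
    unfolding alg_ideal_def
  proof (intro conjI ballI allI)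
    show "?M \<subseteq> A" by auto
    show "0 \<in> ?M" by (auto simp: A0)
  next
    fix x z assume "x \<in> ?M" "z \<in> ?M" thus "x + z \<in> ?M"
      by (auto simp: Aadd distrib_left distrib_right)
  next
    fix r x assume x: "x \<in> ?M"
    have "y * t * s r x = s r (y * t * x)" for t by (simp add: phi_mR)
    moreover have "s r x * k = s r (x * k)" for k by (simp add: phi_mL)
    ultimately show "s r x \<in> ?M" using x by (auto simp: Ascal phi_r0)
  next
    fix a x assume a: "a \<in> A" and x: "x \<in> ?M"
    show "a * x \<in> ?M" using a x Kl[OF a] by (auto simp: mult.assoc)
  next
    fix a x assume a: "a \<in> A" and x: "x \<in> ?M"
    have "x * a \<in> A" using a x by (auto intro: Amul)
    moreover have "y * t * (x * a) = 0" if "t \<in> A" for t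
      using x that by (simp add: mult.assoc[symmetric])
    moreover have "x * a * k = 0" if "k \<in> ?K" for k
      using x Kl[OF a that] by (simp add: mult.assoc)
    ultimately show "x * a \<in> ?M" by auto
  qed
  moreover have "\<forall>x\<in>?M. \<forall>z\<in>?M. x * z = 0" by auto
  ultimately have M0: "?M \<subseteq> {0}" using sp unfolding semiprime_def by blast
  have "r * y * u \<in> ?M"
  proof -
    have "r * y * u \<in> A" using assms by (auto intro: Amul)
    moreover have "y * t * (r * y * u) = 0" if "t \<in> A" for t
    proof -
      have "y * t * (r * y * u) = (y * (t * r) * y) * u" by (simp add: mult.assoc)
      thus ?thesis using assms that by (simp add: Amul)
    qed
    moreover have "r * y * u * k = 0" if "k \<in> ?K" for k
    proof -
      have "r * y * u * k = r * (y * u * k)" by (simp add: mult.assoc)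
      thus ?thesis using that assms by simp
    qed
    ultimately show ?thesis by auto
  qed
  thus ?thesis using M0 by auto
qed

lemma lemX:
  assumes "\<forall>u\<in>A. t * u * t = 0"
  shows "t = 0"
proof (rule ccontr)
  assume "t \<noteq> 0"
  then obtain a where a: "a \<in> A" "a * t \<noteq> 0" "a * t \<in> A" using lq by blast
  let ?y = "a * t"
  have "?y * u * ?y = 0" if "u \<in> A" for u
  proof -
    have "?y * u * ?y = a * (t * (u * a) * t)" by (simp add: mult.assoc)
    thus ?thesis using assms that a by (simp add: Amul)
  qed
  hence ryu: "r * ?y * u = 0" if "r \<in> A" "u \<in> A" for r u
    using SP2[OF a(3)] that by blast
  obtain b where b: "b \<in> A" "b * ?y \<noteq> 0" using lq[of ?y 0] a by auto
  have "b * ?y \<in> A" using b a by (simp add: Amul)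
  moreover have "\<forall>k\<in>A. b * ?y * k = 0" using ryu b by blast
  ultimately have "b * ?y = 0" by (rule SP1)
  thus False using b by simp
qed

lemma lemY:
  assumes "\<forall>w\<in>A. w * c \<in> A \<longrightarrow> w * x = 0"
  shows "x = 0"
proof (rule ccontr)
  assume "x \<noteq> 0"
  then obtain a where "a \<in> A" "a * x \<noteq> 0" "a * c \<in> A" using lq by blast
  thus False using assms by blast
qed


lemma gpi_aux:
  "\<forall>(K::'i set) (a::'i \<Rightarrow> 'q) b p. card K = n \<longrightarrow> finite K \<longrightarrow> (\<forall>i\<in>K. a i \<in> A) \<longrightarrow>
     (\<forall>y\<in>A. (\<Sum>i\<in>K. a i * y * b i) = 0) \<longrightarrow> (\<Sum>i\<in>K. a i * p * b i) = 0"
proof (induction n rule: less_induct)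
  case (less n)
  show ?case
  proof (intro allI impI)
    fix K :: "'i set" and a b :: "'i \<Rightarrow> 'q" and p :: 'q
    assume cK: "card K = n" and fK: "finite K" and aA: "\<forall>i\<in>K. a i \<in> A"
      and hyp: "\<forall>y\<in>A. (\<Sum>i\<in>K. a i * y * b i) = 0"
    define z where "z = (\<Sum>i\<in>K. a i * p * b i)"
    have key: "a j * w * z = 0" if j: "j \<in> K" and w: "w \<in> A" "w * (a j * p) \<in> A" for j w
    proof -
      define a' where "a' = (\<lambda>i. a j * w * a i - a i * w * a j)"
      have cardlt: "card (K - {j}) < n" using card_Diff1_less[OF fK j] cK by simp
      have a'A: "\<forall>i\<in>K-{j}. a' i \<in> A" unfolding a'_def using aA j w
        by (auto intro!: Adiff Amul)
      have exp: "(\<Sum>i\<in>K. a' i * y * b i) = a j * w * (\<Sum>i\<in>K. a i * y * b i) - (\<Sum>i\<in>K. a i * (w * a j * y) * b i)" for y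
        unfolding a'_def by (simp add: sum_distrib_left sum_subtractf left_diff_distrib mult.assoc)
      have rem: "(\<Sum>i\<in>K. a' i * y * b i) = (\<Sum>i\<in>K-{j}. a' i * y * b i)" for y
      proof -
        have "(\<Sum>i\<in>K. a' i * y * b i) = a' j * y * b j + (\<Sum>i\<in>K-{j}. a' i * y * b i)"
          using sum.remove[OF fK j] by blast
        moreover have "a' j = 0" unfolding a'_def by simp
        ultimately show ?thesis by simp
      qed
      have hyp': "\<forall>y\<in>A. (\<Sum>i\<in>K-{j}. a' i * y * b i) = 0"
      proof
        fix y assume y: "y \<in> A"
        have "w * a j * y \<in> A" using w y aA j by (auto intro!: Amul)
        thus "(\<Sum>i\<in>K-{j}. a' i * y * b i) = 0"
          using hyp y exp[of y] rem[of y] by simp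
      qed
      have "(\<Sum>i\<in>K-{j}. a' i * p * b i) = 0"
        using less.IH[OF cardlt, rule_format, of "K - {j}" a' b p] fK a'A hyp' by simp
      hence "a j * w * z - (\<Sum>i\<in>K. a i * (w * a j * p) * b i) = 0"
        using exp[of p] rem[of p] unfolding z_def by simp
      moreover have "(\<Sum>i\<in>K. a i * (w * a j * p) * b i) = 0"
      proof -
        have "w * a j * p \<in> A" using w by (simp add: mult.assoc)
        thus ?thesis using hyp by blast
      qed
      ultimately show ?thesis by simp
    qed
    have zra: "z * r * a j = 0" if j: "j \<in> K" and r: "r \<in> A" for j r
    proof (rule lemY[of "a j * p"], intro ballI impI)
      fix w assume w: "w \<in> A" "w * (a j * p) \<in> A"
      let ?t = "w * (z * r * a j)"
      have "?t * u * ?t = 0" if u: "u \<in> A" for u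
      proof -
        have "u * w \<in> A" using u w by (simp add: Amul)
        moreover have "u * w * (a j * p) \<in> A" using u w by (simp add: Amul mult.assoc)
        ultimately have "a j * (u * w) * z = 0" using key j by blast
        moreover have "?t * u * ?t = (w * z * r) * (a j * (u * w) * z) * (r * a j)"
          by (simp add: mult.assoc)
        ultimately show ?thesis by simp
      qed
      thus "w * (z * r * a j) = 0" using lemX by blast
    qed
    have "z * r * z = 0" if r: "r \<in> A" for r
    proof -
      have "z * r * z = (z * r) * (\<Sum>i\<in>K. a i * p * b i)"
        by (simp only: z_def[symmetric])
      also have "\<dots> = (\<Sum>i\<in>K. (z * r) * (a i * p * b i))"
        by (rule sum_distrib_left)
      also have "\<dots> = (\<Sum>i\<in>K. (z * r * a i) * p * b i)"
        by (simp only: mult.assoc)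
      also have "\<dots> = 0" using zra r by simp
      finally show ?thesis .
    qed
    hence "z = 0" using lemX by blast
    thus "(\<Sum>i\<in>K. a i * p * b i) = 0" unfolding z_def .
  qed
qed

lemma gpi:
  assumes "finite K" "\<forall>i\<in>K. a i \<in> A" "\<forall>y\<in>A. (\<Sum>i\<in>K. a i * y * b i) = 0"
  shows "(\<Sum>i\<in>K. a i * p * b i) = 0"
  using gpi_aux[of "card K"] assms by blast

lemma unit_ex: "\<exists>e::'q. \<forall>x. e * x = x \<and> x * e = x"
proof -
  have "dense_left_ideal s A A"
    unfolding dense_left_ideal_def left_ideal_def
    using lq by (auto simp: A0 Aadd Amul Ascal)
  moreover have "left_module_hom s A A id"
    unfolding left_module_hom_def by auto
  ultimately obtain e where e: "\<forall>x\<in>A. x = x * e" using mx by fastforce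
  have r: "p * e = p" for p
  proof (rule ccontr)
    assume "p * e \<noteq> p"
    hence "p * e - p \<noteq> 0" by simp
    then obtain a where a: "a \<in> A" "a * (p * e - p) \<noteq> 0" "a * p \<in> A" using lq by blast
    have "a * (p * e - p) = (a * p) * e - a * p" by (simp add: right_diff_distrib mult.assoc)
    also have "\<dots> = 0" using e a by simp
    finally show False using a by simp
  qed
  have l: "e * p = p" for p
  proof (rule ccontr)
    assume "e * p \<noteq> p"
    hence "e * p - p \<noteq> 0" by simp
    then obtain a where a: "a \<in> A" "a * (e * p - p) \<noteq> 0" using lq[of "e * p - p" 0] A0 by auto
    have "a * (e * p - p) = (a * e) * p - a * p" by (simp add: right_diff_distrib mult.assoc)
    also have "\<dots> = 0" using e a by (metis diff_self)
    finally show False using a by simp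
  qed
  show ?thesis using l r by blast
qed

lemma multi:
  fixes c :: "nat \<Rightarrow> 'q" and n :: nat
  assumes "z \<noteq> 0"
  shows "\<exists>t\<in>A. t * z \<noteq> 0 \<and> (\<forall>i<n. t * c i \<in> A)"
proof (induction n)
  case 0
  then show ?case using lq[OF assms, of 0] A0 by auto
next
  case (Suc n)
  then obtain t where t: "t \<in> A" "t * z \<noteq> 0" "\<forall>i<n. t * c i \<in> A" by blast
  then obtain t' where t': "t' \<in> A" "t' * (t * z) \<noteq> 0" "t' * (t * c n) \<in> A" using lq by blast
  have "t' * t \<in> A" using t t' by (simp add: Amul)
  moreover have "(t' * t) * z \<noteq> 0" using t' by (simp add: mult.assoc)
  moreover have "\<forall>i<Suc n. (t' * t) * c i \<in> A"
  proof (intro allI impI)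
    fix i assume "i < Suc n"
    then consider "i < n" | "i = n" by linarith
    thus "(t' * t) * c i \<in> A"
    proof cases
      case 1 thus ?thesis using t t' by (simp add: Amul mult.assoc)
    next
      case 2 thus ?thesis using t' by (simp add: mult.assoc)
    qed
  qed
  ultimately show ?case by blast
qed

lemma sum_scale: fixes x :: 'q shows "s r (\<Sum>(c,d)\<leftarrow>L. c * x * d) = (\<Sum>(c,d)\<leftarrow>map (\<lambda>(c,d). (s r c, d)) L. c * x * d)"
  by (induction L) (auto simp: phi_add phi_r0 phi_mL)

lemma sum_comp1: fixes x :: 'q shows "a * (\<Sum>(c,d)\<leftarrow>L. c * x * d) * b = (\<Sum>(c,d)\<leftarrow>map (\<lambda>(c,d). (a * c, d * b)) L. c * x * d)"
  by (induction L) (simp_all add: algebra_simps case_prod_beta)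

lemma sum_comp2: fixes x :: 'q shows "(\<Sum>(a,b)\<leftarrow>L1. a * (\<Sum>(c,d)\<leftarrow>L2. c * x * d) * b) =
   (\<Sum>(c,d)\<leftarrow>concat (map (\<lambda>(a,b). map (\<lambda>(c,d). (a * c, d * b)) L2) L1). c * x * d)"
  by (induction L1) (auto simp: sum_comp1)

lemma rep:
  fixes e :: 'q
  assumes e: "\<forall>x. e * x = x \<and> x * e = x" and m: "\<mu> \<in> mult_algebra s Q"
  shows "\<exists>L. \<forall>x. \<mu> x = (\<Sum>(c,d)\<leftarrow>L. c * x * d)"
  using m
proof (induction rule: mult_algebra.induct)
  case ma_id
  show ?case by (rule exI[of _ "[(e,e)]"]) (simp add: e id_def)
next
  case (ma_left q)
  show ?case by (rule exI[of _ "[(q,e)]"]) (simp add: e)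
next
  case (ma_right q)
  show ?case by (rule exI[of _ "[(e,q)]"]) (simp add: e)
next
  case ma_zero
  show ?case by (rule exI[of _ "[]"]) simp
next
  case (ma_add f g)
  then obtain L1 L2 where "\<forall>x. f x = (\<Sum>(c,d)\<leftarrow>L1. c * x * d)" "\<forall>x. g x = (\<Sum>(c,d)\<leftarrow>L2. c * x * d)" by blast
  thus ?case by (intro exI[of _ "L1 @ L2"]) simp
next
  case (ma_scale f r)
  then obtain L where "\<forall>x. f x = (\<Sum>(c,d)\<leftarrow>L. c * x * d)" by blast
  thus ?case by (intro exI[of _ "map (\<lambda>(c,d). (s r c, d)) L"]) (simp add: sum_scale)
next
  case (ma_comp f g)
  then obtain L1 L2 where "\<forall>x. f x = (\<Sum>(c,d)\<leftarrow>L1. c * x * d)" "\<forall>x. g x = (\<Sum>(c,d)\<leftarrow>L2. c * x * d)" by blast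
  then have "(f \<circ> g) x = (\<Sum>(a,b)\<leftarrow>L1. a * (\<Sum>(c,d)\<leftarrow>L2. c * x * d) * b)" for x by simp
  then have "(f \<circ> g) x = (\<Sum>(c,d)\<leftarrow>concat (map (\<lambda>(a,b). map (\<lambda>(c,d). (a * c, d * b)) L2) L1). c * x * d)" for x
    by (simp only: sum_comp2)
  thus ?case by blast
qed

lemma sum_list_nth_form: fixes x :: 'q shows
  "(\<Sum>(c,d)\<leftarrow>L. c * x * d) = (\<Sum>i<length L. fst (L!i) * x * snd (L!i))"
  by (simp add: sum_list_sum_nth atLeast0LessThan case_prod_beta)

end

theorem mainTheorem13:
  fixes s :: "'k::comm_ring_1 \<Rightarrow> 'q::ring \<Rightarrow> 'q"
    and A Q :: "'q set"
  assumes "phi_algebra s"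
    and "is_max_left_quotient s A"
    and "semiprime s A"
    and "subalgebra s Q"
    and "A \<subseteq> Q"
  shows "dense_extension s A Q"
proof -
  interpret mq s A using assms(1-3) by unfold_locales
  obtain e :: 'q where e: "\<forall>x. e * x = x \<and> x * e = x" using unit_ex by blast
  show ?thesis unfolding dense_extension_def
  proof (intro conjI ballI impI)
    show "A \<subseteq> Q" by fact
  next
    fix \<mu> x assume \<mu>: "\<mu> \<in> mult_algebra s Q" and van: "\<forall>a\<in>A. \<mu> a = 0" and "x \<in> Q"
    obtain L where L: "\<forall>y. \<mu> y = (\<Sum>(c,d)\<leftarrow>L. c * y * d)" using rep[OF e \<mu>] by blast
    define n where "n = length L"
    define a where "a = (\<lambda>i. fst (L!i))"
    define b where "b = (\<lambda>i. snd (L!i))"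
    have sf: "\<mu> y = (\<Sum>i<n. a i * y * b i)" for y
      using L sum_list_nth_form unfolding n_def a_def b_def by simp
    show "\<mu> x = 0"
    proof (rule ccontr)
      assume z: "\<mu> x \<noteq> 0"
      obtain t where t: "t \<in> A" "t * \<mu> x \<noteq> 0" "\<forall>i<n. t * a i \<in> A"
        using multi[OF z] by blast
      have "(\<Sum>i\<in>{..<n}. (t * a i) * x * b i) = 0"
      proof (rule gpi)
        show "finite {..<n}" by simp
        show "\<forall>i\<in>{..<n}. t * a i \<in> A" using t by simp
        show "\<forall>y\<in>A. (\<Sum>i\<in>{..<n}. t * a i * y * b i) = 0"
        proof
          fix y assume "y \<in> A"
          hence "\<mu> y = 0" using van by blast
          hence "t * \<mu> y = 0" by simp
          thus "(\<Sum>i\<in>{..<n}. t * a i * y * b i) = 0"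
            by (simp add: sf sum_distrib_left mult.assoc)
        qed
      qed
      moreover have "t * \<mu> x = (\<Sum>i\<in>{..<n}. (t * a i) * x * b i)"
        by (simp add: sf sum_distrib_left mult.assoc)
      ultimately show False using t by simp
    qed
  qed
qed

end
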